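(* Let $X$ be a finite $T_0$ topological space, $\mathcal V$ a multivector field on $X$ with $X$ invariant, and $\mathcal M=\{M_p\mid p\in\mathbb P\}$ an indexed family of mutually disjoint subsets of $X$. The following are equivalent: (i) $\mathcal M$ is a Morse decomposition of $X$; (ii) each $M_p$ is a saturated isolated invariant subset of $X$, and $\mathbb P$ admits a partial order $\le$ such that for every essential solution $\gamma$ in $X$ there exist $p,q\in\mathbb P$ with $p\ge q$, $\alpha(\gamma)\subset M_p$ and $\omega(\gamma)\subset M_q$; (iii) each $M_p$ is an isolated invariant subset of $X$, and $\mathbb P$ admits a partial order $\le$ such that for every essential solution $\gamma$ in $X$ either $\operatorname{im}\gamma\subset M_p$ for some $p\in\mathbb P$, or there exist $p,q\in\mathbb P$ with $p>q$, $\alpha(\gamma)\subset M_p$ and $\omega(\gamma)\subset M_q$. In particular, every Morse set in a Morse decomposition is saturated and isolated.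
   Context: Notation: $\operatorname{cl}$ is closure; $A\subset X$ is locally closed if $\operatorname{cl}A\setminus A$ is closed. A multivector field $\mathcal V$ on $X$ is a partition of $X$ into locally closed sets (multivectors); $[x]_{\mathcal V}$ is the multivector containing $x$. A multivector $V$ is critical if $H(\operatorname{cl}V,\operatorname{cl}V\setminus V)$ (relative singular homology) is nontrivial, regular otherwise. $A$ is $\mathcal V$-compatible if it is a union of multivectors; $\langle A\rangle_{\mathcal V}$ is the smallest locally closed $\mathcal V$-compatible set containing $A$. $\Pi_{\mathcal V}(x)=\operatorname{cl}\{x\}\cup[x]_{\mathcal V}$. A solution is a partial map $\gamma:\mathbb Z\nrightarrow X$ with domain an integer interval and $\gamma(t+1)\in\Pi_{\mathcal V}(\gamma(t))$; a path has finite domain; a full solution has domain $\mathbb Z$. $\alpha(\gamma)=\langle\bigcap_{t\le0}\gamma((-\infty,t])\rangle_{\mathcal V}$, $\omega(\gamma)=\langle\bigcap_{t\ge0}\gamma([t,\infty))\rangle_{\mathcal V}$. A full solution is essential unless $\alpha(\gamma)$ or $\omega(\gamma)$ lies in a single regular multivector; an essential solution in $A$ is one with image in $A$. $\operatorname{Inv}S$ is the set of $x\in S$ with an essential solution $\gamma$ in $S$, $\gamma(0)=x$; $S$ is invariant if $\operatorname{Inv}S=S$. An invariant $S$ is isolated invariant if there is a closed $N\supset\Pi_{\mathcal V}(S)$ such that every path in $N$ with endpoints in $S$ has image in $S$. A full solution is a link from $S_1$ to $S_2$ if $\alpha(\gamma)\cap S_1\ne\emptyset\ne\omega(\gamma)\cap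 S_2$. A Morse predecomposition of $X$ is an indexed family of mutually disjoint isolated invariant subsets $\{M_p\mid p\in\mathbb P\}$ such that every essential solution in $X$ is a link from some $M_p$ to some $M_q$. A preorder $\le$ on $\mathbb P$ is admissible if a link from $M_p$ to $M_q$ implies $q\le p$. An invariant $T\subset X$ is saturated if every essential solution $\gamma$ in $X$ with $\alpha(\gamma)\subset T$ and $\omega(\gamma)\subset T$ has $\operatorname{im}\gamma\subset T$. A Morse decomposition of $X$ is a Morse predecomposition all of whose members are saturated and for which some admissible preorder is a partial order. *)

theory Defs
  imports "HOL-Analysis.Analysis" "HOL-Homology.Homology"
begin

definition locally_closed_set :: "'a topology \<Rightarrow> 'a set \<Rightarrow> bool" where
  "locally_closed_set X A \<longleftrightarrow> A \<subseteq> topspace X \<and> closedin X (X closure_of A - A)"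

definition multivector_field :: "'a topology \<Rightarrow> 'a set set \<Rightarrow> bool" where
  "multivector_field X V \<longleftrightarrow>
     \<Union>V = topspace X \<and> (\<forall>v\<in>V. v \<noteq> {} \<and> locally_closed_set X v) \<and>
     (\<forall>v\<in>V. \<forall>w\<in>V. v \<noteq> w \<longrightarrow> v \<inter> w = {})"

definition mv_of :: "'a set set \<Rightarrow> 'a \<Rightarrow> 'a set" where
  "mv_of V x = (THE v. v \<in> V \<and> x \<in> v)"

definition critical_mv :: "'a topology \<Rightarrow> 'a set \<Rightarrow> bool" where
  "critical_mv X v \<longleftrightarrow>
     (\<exists>p::int. \<not> trivial_group
        (relative_homology_group p (subtopology X (X closure_of v)) (X closure_of v - v)))"

definition regular_mv :: "'a topology \<Rightarrow> 'a set \<Rightarrow> bool" where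
  "regular_mv X v \<longleftrightarrow> \<not> critical_mv X v"

definition compatible :: "'a set set \<Rightarrow> 'a set \<Rightarrow> bool" where
  "compatible V A \<longleftrightarrow> (\<exists>W\<subseteq>V. A = \<Union>W)"

definition lc_hull :: "'a topology \<Rightarrow> 'a set set \<Rightarrow> 'a set \<Rightarrow> 'a set" where
  "lc_hull X V A = \<Inter>{B. A \<subseteq> B \<and> locally_closed_set X B \<and> compatible V B}"

definition Pi_V :: "'a topology \<Rightarrow> 'a set set \<Rightarrow> 'a \<Rightarrow> 'a set" where
  "Pi_V X V x = X closure_of {x} \<union> mv_of V x"

definition Pi_V_set :: "'a topology \<Rightarrow> 'a set set \<Rightarrow> 'a set \<Rightarrow> 'a set" where
  "Pi_V_set X V S = (\<Union>x\<in>S. Pi_V X V x)"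

definition full_solution :: "'a topology \<Rightarrow> 'a set set \<Rightarrow> (int \<Rightarrow> 'a) \<Rightarrow> bool" where
  "full_solution X V \<gamma> \<longleftrightarrow>
     range \<gamma> \<subseteq> topspace X \<and> (\<forall>t. \<gamma> (t + 1) \<in> Pi_V X V (\<gamma> t))"

definition is_path :: "'a topology \<Rightarrow> 'a set set \<Rightarrow> int \<Rightarrow> int \<Rightarrow> (int \<Rightarrow> 'a) \<Rightarrow> bool" where
  "is_path X V a b \<gamma> \<longleftrightarrow>
     a \<le> b \<and> \<gamma> ` {a..b} \<subseteq> topspace X \<and> (\<forall>t\<in>{a..<b}. \<gamma> (t + 1) \<in> Pi_V X V (\<gamma> t))"

definition alpha_limit :: "'a topology \<Rightarrow> 'a set set \<Rightarrow> (int \<Rightarrow> 'a) \<Rightarrow> 'a set" where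
  "alpha_limit X V \<gamma> = lc_hull X V (\<Inter>t\<in>{..0}. \<gamma> ` {..t})"

definition omega_limit :: "'a topology \<Rightarrow> 'a set set \<Rightarrow> (int \<Rightarrow> 'a) \<Rightarrow> 'a set" where
  "omega_limit X V \<gamma> = lc_hull X V (\<Inter>t\<in>{0..}. \<gamma> ` {t..})"

definition essential :: "'a topology \<Rightarrow> 'a set set \<Rightarrow> (int \<Rightarrow> 'a) \<Rightarrow> bool" where
  "essential X V \<gamma> \<longleftrightarrow> full_solution X V \<gamma> \<and>
     \<not> (\<exists>v\<in>V. regular_mv X v \<and> alpha_limit X V \<gamma> \<subseteq> v) \<and>
     \<not> (\<exists>v\<in>V. regular_mv X v \<and> omega_limit X V \<gamma> \<subseteq> v)"

definition essential_in :: "'a topology \<Rightarrow> 'a set set \<Rightarrow> 'a set \<Rightarrow> (int \<Rightarrow> 'a) \<Rightarrow> bool" where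
  "essential_in X V A \<gamma> \<longleftrightarrow> essential X V \<gamma> \<and> range \<gamma> \<subseteq> A"

definition Inv :: "'a topology \<Rightarrow> 'a set set \<Rightarrow> 'a set \<Rightarrow> 'a set" where
  "Inv X V S = {x\<in>S. \<exists>\<gamma>. essential_in X V S \<gamma> \<and> \<gamma> 0 = x}"

definition invariant :: "'a topology \<Rightarrow> 'a set set \<Rightarrow> 'a set \<Rightarrow> bool" where
  "invariant X V S \<longleftrightarrow> Inv X V S = S"

definition isolated_invariant :: "'a topology \<Rightarrow> 'a set set \<Rightarrow> 'a set \<Rightarrow> bool" where
  "isolated_invariant X V S \<longleftrightarrow> invariant X V S \<and>
     (\<exists>N. closedin X N \<and> Pi_V_set X V S \<subseteq> N \<and>
        (\<forall>a b \<gamma>. is_path X V a b \<gamma> \<and> \<gamma> ` {a..b} \<subseteq> N \<and> \<gamma> a \<in> S \<and> \<gamma> b \<in> S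
                  \<longrightarrow> \<gamma> ` {a..b} \<subseteq> S))"

definition is_link :: "'a topology \<Rightarrow> 'a set set \<Rightarrow> (int \<Rightarrow> 'a) \<Rightarrow> 'a set \<Rightarrow> 'a set \<Rightarrow> bool" where
  "is_link X V \<gamma> S1 S2 \<longleftrightarrow> full_solution X V \<gamma> \<and>
     alpha_limit X V \<gamma> \<inter> S1 \<noteq> {} \<and> omega_limit X V \<gamma> \<inter> S2 \<noteq> {}"

definition morse_predecomposition ::
  "'a topology \<Rightarrow> 'a set set \<Rightarrow> 'p set \<Rightarrow> ('p \<Rightarrow> 'a set) \<Rightarrow> bool" where
  "morse_predecomposition X V P M \<longleftrightarrow>
     (\<forall>p\<in>P. M p \<subseteq> topspace X) \<and>
     (\<forall>p\<in>P. \<forall>q\<in>P. p \<noteq> q \<longrightarrow> M p \<inter> M q = {}) \<and>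
     (\<forall>p\<in>P. isolated_invariant X V (M p)) \<and>
     (\<forall>\<gamma>. essential_in X V (topspace X) \<gamma> \<longrightarrow>
        (\<exists>p\<in>P. \<exists>q\<in>P. is_link X V \<gamma> (M p) (M q)))"

text \<open>admissible preorder, given as a relation r on P; (q,p) \<in> r means q \<le> p\<close>
definition admissible_preorder ::
  "'a topology \<Rightarrow> 'a set set \<Rightarrow> 'p set \<Rightarrow> ('p \<Rightarrow> 'a set) \<Rightarrow> 'p rel \<Rightarrow> bool" where
  "admissible_preorder X V P M r \<longleftrightarrow> preorder_on P r \<and>
     (\<forall>p\<in>P. \<forall>q\<in>P. (\<exists>\<gamma>. is_link X V \<gamma> (M p) (M q)) \<longrightarrow> (q, p) \<in> r)"

definition saturated :: "'a topology \<Rightarrow> 'a set set \<Rightarrow> 'a set \<Rightarrow> bool" where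
  "saturated X V T \<longleftrightarrow> invariant X V T \<and>
     (\<forall>\<gamma>. essential_in X V (topspace X) \<gamma> \<and> alpha_limit X V \<gamma> \<subseteq> T \<and>
          omega_limit X V \<gamma> \<subseteq> T \<longrightarrow> range \<gamma> \<subseteq> T)"

definition morse_decomposition ::
  "'a topology \<Rightarrow> 'a set set \<Rightarrow> 'p set \<Rightarrow> ('p \<Rightarrow> 'a set) \<Rightarrow> bool" where
  "morse_decomposition X V P M \<longleftrightarrow> morse_predecomposition X V P M \<and>
     (\<forall>p\<in>P. saturated X V (M p)) \<and>
     (\<exists>r. admissible_preorder X V P M r \<and> partial_order_on P r)"

end

theory Submission imports Defs begin

definition stp :: "'a topology \<Rightarrow> 'a set set \<Rightarrow> 'a \<Rightarrow> 'a \<Rightarrow> bool" where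
  "stp X V x y \<longleftrightarrow> x \<in> topspace X \<and> y \<in> Pi_V X V x"

locale mvf =
  fixes X :: "'a topology" and V :: "'a set set"
  assumes fin: "finite (topspace X)" and mvf: "multivector_field X V"
begin

lemma mv_eq: assumes "v \<in> V" "x \<in> v" shows "mv_of V x = v"
proof -
  have d: "\<forall>v\<in>V. \<forall>w\<in>V. v \<noteq> w \<longrightarrow> v \<inter> w = {}" using mvf unfolding multivector_field_def by simp
  have h: "\<And>w. w \<in> V \<and> x \<in> w \<Longrightarrow> w = v"
  proof -
    fix w assume "w \<in> V \<and> x \<in> w"
    then show "w = v" using d assms by (metis IntI empty_iff)
  qed
  show ?thesis unfolding mv_of_def
  proof (rule the_equality)
    show "v \<in> V \<and> x \<in> v" using assms by simp
  next
    fix w assume "w \<in> V \<and> x \<in> w" then show "w = v" by (rule h)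
  qed
qed

lemma mv_in: assumes "x \<in> topspace X" shows "mv_of V x \<in> V" "x \<in> mv_of V x"
proof -
  obtain v where "v \<in> V" "x \<in> v" using mvf assms unfolding multivector_field_def by blast
  then show "mv_of V x \<in> V" "x \<in> mv_of V x" using mv_eq by auto
qed

lemma mv_sub: assumes "x \<in> topspace X" shows "mv_of V x \<subseteq> topspace X"
  using mv_in[OF assms] mvf unfolding multivector_field_def by blast

lemma mv_same: assumes "x \<in> topspace X" "w \<in> mv_of V x" shows "mv_of V w = mv_of V x"
  using mv_eq mv_in assms by blast

lemma Pi_sub: assumes "x \<in> topspace X" shows "Pi_V X V x \<subseteq> topspace X"
  using mv_sub[OF assms] closure_of_subset_topspace[of X "{x}"] unfolding Pi_V_def by blast

lemma self_Pi: assumes "x \<in> topspace X" shows "x \<in> Pi_V X V x"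
  using mv_in[OF assms] unfolding Pi_V_def by blast

lemma cl_single: assumes "y \<in> X closure_of S" "S \<subseteq> topspace X"
  shows "\<exists>s\<in>S. y \<in> X closure_of {s}"
proof -
  have f: "finite S" using assms fin finite_subset by blast
  have "S = \<Union>((\<lambda>s. {s}) ` S)" by auto
  then have "X closure_of S = (\<Union>s\<in>S. X closure_of {s})"
    using closure_of_Union[of "(\<lambda>s. {s}) ` S" X] f by simp
  then show ?thesis using assms by auto
qed

lemma convex_lc:
  assumes S: "S \<subseteq> topspace X"
    and cv: "\<And>a b c. a \<in> S \<Longrightarrow> c \<in> S \<Longrightarrow> b \<in> X closure_of {c} \<Longrightarrow> a \<in> X closure_of {b} \<Longrightarrow> b \<in> S"
  shows "locally_closed_set X S"
proof -
  define DD where "DD = X closure_of S - S"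
  have DDt: "DD \<subseteq> topspace X" unfolding DD_def using closure_of_subset_topspace[of X S] by blast
  have "DD = (\<Union>y\<in>DD. X closure_of {y})"
  proof
    show "DD \<subseteq> (\<Union>y\<in>DD. X closure_of {y})"
    proof
      fix y assume y: "y \<in> DD"
      then have "y \<in> topspace X" using DDt by blast
      then have "y \<in> X closure_of {y}" using closure_of_subset[of "{y}" X] by simp
      then show "y \<in> (\<Union>y\<in>DD. X closure_of {y})" using y by blast
    qed
    show "(\<Union>y\<in>DD. X closure_of {y}) \<subseteq> DD"
    proof
      fix w assume "w \<in> (\<Union>y\<in>DD. X closure_of {y})"
      then obtain y where y: "y \<in> DD" "w \<in> X closure_of {y}" by blast
      have "X closure_of {y} \<subseteq> X closure_of S"
        using closure_of_mono[of "{y}" "X closure_of S" X] y(1) unfolding DD_def by auto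
      then have w1: "w \<in> X closure_of S" using y by blast
      have "w \<notin> S"
      proof
        assume "w \<in> S"
        obtain s where "s \<in> S" "y \<in> X closure_of {s}" using cl_single[OF _ S] y(1) unfolding DD_def by blast
        then have "y \<in> S" using cv[OF \<open>w \<in> S\<close> \<open>s \<in> S\<close> _ y(2)] by blast
        then show False using y(1) unfolding DD_def by blast
      qed
      then show "w \<in> DD" using w1 unfolding DD_def by blast
    qed
  qed
  moreover have "closedin X (\<Union>y\<in>DD. X closure_of {y})"
    apply (rule closedin_Union)
    using DDt fin finite_subset by auto
  ultimately show ?thesis unfolding locally_closed_set_def DD_def using S by simp
qed

lemma compat: assumes "S \<subseteq> topspace X" "\<And>x. x \<in> S \<Longrightarrow> mv_of V x \<subseteq> S"
  shows "compatible V S"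
  unfolding compatible_def
  apply (rule exI[of _ "mv_of V ` S"])
  using assms mv_in by blast

end

lemma hull_sub: "B \<subseteq> S \<Longrightarrow> locally_closed_set X S \<Longrightarrow> compatible V S \<Longrightarrow> lc_hull X V B \<subseteq> S"
  unfolding lc_hull_def by blast

lemma hull_sup: "B \<subseteq> lc_hull X V B"
  unfolding lc_hull_def by blast


context mvf begin

abbreviation reach where "reach \<equiv> (stp X V)\<^sup>*\<^sup>*"

lemma stp_top: "stp X V x y \<Longrightarrow> y \<in> topspace X"
  using Pi_sub unfolding stp_def by blast

lemma reach_top: "reach x y \<Longrightarrow> x \<in> topspace X \<Longrightarrow> y \<in> topspace X"
  by (induction rule: rtranclp_induct) (auto dest: stp_top)

lemma sol_top: "full_solution X V \<gamma> \<Longrightarrow> \<gamma> t \<in> topspace X"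
  unfolding full_solution_def by blast

lemma sol_reach: assumes "full_solution X V \<gamma>" "t \<le> s" shows "reach (\<gamma> t) (\<gamma> s)"
proof -
  have "reach (\<gamma> t) (\<gamma> (t + int n))" for n
  proof (induction n)
    case 0 then show ?case by simp
  next
    case (Suc n)
    have "stp X V (\<gamma> (t + int n)) (\<gamma> (t + int n + 1))"
      using assms(1) unfolding full_solution_def stp_def by blast
    have "reach (\<gamma> t) (\<gamma> (t + int n + 1))" using Suc \<open>stp X V _ _\<close> by (meson rtranclp.rtrancl_into_rtrancl)
    then show ?case by (simp add: ac_simps)
  qed
  from this[of "nat (s - t)"] show ?thesis using assms(2) by simp
qed

definition RT where "RT A = {z \<in> topspace X. \<exists>a\<in>A. reach z a}"
definition RF where "RF A = {z \<in> topspace X. \<exists>a\<in>A. reach a z}"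

lemma cl_Pi: "b \<in> topspace X \<Longrightarrow> a \<in> X closure_of {b} \<Longrightarrow> stp X V b a"
  unfolding stp_def Pi_V_def by blast

lemma cl_top: "b \<in> X closure_of S \<Longrightarrow> b \<in> topspace X"
  using closure_of_subset_topspace[of X S] by blast

lemma mv_stp: "x \<in> topspace X \<Longrightarrow> w \<in> mv_of V x \<Longrightarrow> stp X V w x"
  unfolding stp_def Pi_V_def using mv_same mv_in mv_sub by blast

lemma mv_stp2: "x \<in> topspace X \<Longrightarrow> w \<in> mv_of V x \<Longrightarrow> stp X V x w"
  unfolding stp_def Pi_V_def by blast

lemma RT_lc: "locally_closed_set X (RT A)" "compatible V (RT A)"
proof -
  show "locally_closed_set X (RT A)"
  proof (rule convex_lc)
    show "RT A \<subseteq> topspace X" unfolding RT_def by blast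
    fix a b c assume "a \<in> RT A" "c \<in> RT A" "b \<in> X closure_of {c}" "a \<in> X closure_of {b}"
    then obtain a0 where a0: "a0 \<in> A" "reach a a0" unfolding RT_def by blast
    have bt: "b \<in> topspace X" using \<open>b \<in> X closure_of {c}\<close> by (rule cl_top)
    have "stp X V b a" using cl_Pi[OF bt \<open>a \<in> X closure_of {b}\<close>] .
    then have "reach b a0" using a0(2) by (rule converse_rtranclp_into_rtranclp)
    then show "b \<in> RT A" unfolding RT_def using bt a0(1) by blast
  qed
  show "compatible V (RT A)"
  proof (rule compat)
    show "RT A \<subseteq> topspace X" unfolding RT_def by blast
    fix x assume x: "x \<in> RT A"
    show "mv_of V x \<subseteq> RT A"
    proof
      fix w assume w: "w \<in> mv_of V x"
      have xt: "x \<in> topspace X" using x unfolding RT_def by blast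
      have "stp X V w x" using mv_stp[OF xt w] .
      obtain a0 where a0: "a0 \<in> A" "reach x a0" using x unfolding RT_def by blast
      have "reach w a0" using \<open>stp X V w x\<close> a0(2) by (rule converse_rtranclp_into_rtranclp)
      then show "w \<in> RT A" using w mv_sub[OF xt] a0(1) unfolding RT_def by blast
    qed
  qed
qed

lemma RF_lc: "locally_closed_set X (RF A)" "compatible V (RF A)"
proof -
  show "locally_closed_set X (RF A)"
  proof (rule convex_lc)
    show "RF A \<subseteq> topspace X" unfolding RF_def by blast
    fix a b c assume "a \<in> RF A" "c \<in> RF A" "b \<in> X closure_of {c}" "a \<in> X closure_of {b}"
    then obtain a0 where a0: "a0 \<in> A" "reach a0 c" unfolding RF_def by blast
    have ct: "c \<in> topspace X" using \<open>c \<in> RF A\<close> unfolding RF_def by blast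
    have bt: "b \<in> topspace X" using \<open>b \<in> X closure_of {c}\<close> by (rule cl_top)
    have "stp X V c b" using cl_Pi[OF ct \<open>b \<in> X closure_of {c}\<close>] .
    then have "reach a0 b" using a0(2) by (meson rtranclp.rtrancl_into_rtrancl)
    then show "b \<in> RF A" unfolding RF_def using bt a0(1) by blast
  qed
  show "compatible V (RF A)"
  proof (rule compat)
    show "RF A \<subseteq> topspace X" unfolding RF_def by blast
    fix x assume x: "x \<in> RF A"
    show "mv_of V x \<subseteq> RF A"
    proof
      fix w assume w: "w \<in> mv_of V x"
      have xt: "x \<in> topspace X" using x unfolding RF_def by blast
      have "stp X V x w" using mv_stp2[OF xt w] .
      obtain a0 where a0: "a0 \<in> A" "reach a0 x" using x unfolding RF_def by blast
      have "reach a0 w" using a0(2) \<open>stp X V x w\<close> by (meson rtranclp.rtrancl_into_rtrancl)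
      then show "w \<in> RF A" using w mv_sub[OF xt] a0(1) unfolding RF_def by blast
    qed
  qed
qed

lemma hull_strong:
  assumes A: "A \<subseteq> topspace X" and sc: "\<And>a a'. a \<in> A \<Longrightarrow> a' \<in> A \<Longrightarrow> reach a a'"
    and x: "x \<in> lc_hull X V A" and z: "z \<in> lc_hull X V A"
  shows "reach x z"
proof -
  have "A \<subseteq> RT A" unfolding RT_def using A by blast
  then have "x \<in> RT A" using hull_sub[OF _ RT_lc] x by blast
  then obtain a where a: "a \<in> A" "reach x a" unfolding RT_def by blast
  have "A \<subseteq> RF A" unfolding RF_def using A by blast
  then have "z \<in> RF A" using hull_sub[OF _ RF_lc] z by blast
  then obtain a' where a': "a' \<in> A" "reach a' z" unfolding RF_def by blast
  show ?thesis using a a' sc[OF a(1) a'(1)] by (meson rtranclp_trans)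
qed

lemma top_lc: "locally_closed_set X (topspace X)" "compatible V (topspace X)"
  by (rule convex_lc, simp, meson cl_top, rule compat, auto dest: mv_sub)

lemma hull_top: "A \<subseteq> topspace X \<Longrightarrow> lc_hull X V A \<subseteq> topspace X"
  using hull_sub[of A "topspace X"] top_lc by blast

end


context mvf begin

lemma three_path:
  assumes N: "\<forall>a b \<gamma>. is_path X V a b \<gamma> \<and> \<gamma> ` {a..b} \<subseteq> N \<and> \<gamma> a \<in> S \<and> \<gamma> b \<in> S \<longrightarrow> \<gamma> ` {a..b} \<subseteq> S"
    and xt: "x \<in> topspace X" and yt: "y \<in> topspace X" and zt: "z \<in> topspace X"
    and xy: "y \<in> Pi_V X V x" and yz: "z \<in> Pi_V X V y"
    and inN: "x \<in> N" "y \<in> N" "z \<in> N" and xS: "x \<in> S" and zS: "z \<in> S"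
  shows "y \<in> S"
proof -
  define g where "g = (\<lambda>t::int. if t = 0 then x else if t = 1 then y else z)"
  have e1: "{0..2::int} = {0,1,2}" by auto
  have e2: "{0..<2::int} = {0,1}" by auto
  have "is_path X V 0 2 g" unfolding is_path_def e1 e2 g_def using xt yt zt xy yz by auto
  moreover have "g ` {0..2} \<subseteq> N" unfolding e1 g_def using inN by auto
  moreover have "g 0 \<in> S" "g 2 \<in> S" unfolding g_def using xS zS by auto
  ultimately have "g ` {0..2} \<subseteq> S" using N by blast
  then show ?thesis unfolding e1 g_def by auto
qed

lemma iso_lc:
  assumes St: "S \<subseteq> topspace X" and iso: "isolated_invariant X V S"
  shows "locally_closed_set X S" "compatible V S"
proof -
  obtain N where N: "closedin X N" "Pi_V_set X V S \<subseteq> N"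
    "\<forall>a b \<gamma>. is_path X V a b \<gamma> \<and> \<gamma> ` {a..b} \<subseteq> N \<and> \<gamma> a \<in> S \<and> \<gamma> b \<in> S \<longrightarrow> \<gamma> ` {a..b} \<subseteq> S"
    using iso unfolding isolated_invariant_def by blast
  have PiN: "Pi_V X V x \<subseteq> N" if "x \<in> S" for x
    using N(2) that unfolding Pi_V_set_def by blast
  have SN: "x \<in> N" if "x \<in> S" for x
    using PiN[OF that] self_Pi[of x] that St by blast
  show "locally_closed_set X S"
  proof (rule convex_lc[OF St])
    fix a b c assume a: "a \<in> S" and c: "c \<in> S" and bc: "b \<in> X closure_of {c}" and ab: "a \<in> X closure_of {b}"
    have bt: "b \<in> topspace X" using bc by (rule cl_top)
    have "b \<in> Pi_V X V c" using bc unfolding Pi_V_def by blast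
    moreover have "a \<in> Pi_V X V b" using ab unfolding Pi_V_def by blast
    ultimately show "b \<in> S" using three_path[OF N(3), of c b a] St a c bt SN PiN[OF c] by blast
  qed
  show "compatible V S"
  proof (rule compat[OF St])
    fix x assume x: "x \<in> S"
    have xt: "x \<in> topspace X" using x St by blast
    show "mv_of V x \<subseteq> S"
    proof
      fix w assume w: "w \<in> mv_of V x"
      have wt: "w \<in> topspace X" using w mv_sub[OF xt] by blast
      have "w \<in> Pi_V X V x" using w unfolding Pi_V_def by blast
      moreover have "x \<in> Pi_V X V w" using mv_stp[OF xt w] unfolding stp_def by blast
      ultimately show "w \<in> S" using three_path[OF N(3), of x w x] xt wt x SN PiN[OF x] by blast
    qed
  qed
qed

lemma iso_hull: "S \<subseteq> topspace X \<Longrightarrow> isolated_invariant X V S \<Longrightarrow> B \<subseteq> S \<Longrightarrow> lc_hull X V B \<subseteq> S"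
  using hull_sub iso_lc by blast

definition Apast :: "(int \<Rightarrow> 'a) \<Rightarrow> 'a set" where "Apast \<gamma> = (\<Inter>t\<in>{..0}. \<gamma> ` {..t})"
definition Bfut :: "(int \<Rightarrow> 'a) \<Rightarrow> 'a set" where "Bfut \<gamma> = (\<Inter>t\<in>{0..}. \<gamma> ` {t..})"

lemma alpha_Apast: "alpha_limit X V \<gamma> = lc_hull X V (Apast \<gamma>)"
  unfolding alpha_limit_def Apast_def ..
lemma omega_Bfut: "omega_limit X V \<gamma> = lc_hull X V (Bfut \<gamma>)"
  unfolding omega_limit_def Bfut_def ..

lemma Apast_range: "Apast \<gamma> \<subseteq> range \<gamma>" unfolding Apast_def by blast
lemma Bfut_range: "Bfut \<gamma> \<subseteq> range \<gamma>" unfolding Bfut_def by blast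

lemma sol_range_fin: "full_solution X V \<gamma> \<Longrightarrow> finite (range \<gamma>)"
  using fin finite_subset unfolding full_solution_def by blast

lemma Apast_ne: assumes "full_solution X V \<gamma>" shows "Apast \<gamma> \<noteq> {}"
proof
  assume e: "Apast \<gamma> = {}"
  have "\<forall>y\<in>range \<gamma>. \<exists>t\<le>0. y \<notin> \<gamma> ` {..t}"
    using e unfolding Apast_def by blast
  then obtain g where g: "\<forall>y\<in>range \<gamma>. g y \<le> 0 \<and> y \<notin> \<gamma> ` {..g y}" by metis
  define T where "T = Min (g ` range \<gamma>)"
  have "T \<le> g (\<gamma> T)" unfolding T_def using sol_range_fin[OF assms] by simp
  then have "\<gamma> T \<in> \<gamma> ` {..g (\<gamma> T)}" by simp
  then show False using g by blast
qed

lemma Bfut_ne: assumes "full_solution X V \<gamma>" shows "Bfut \<gamma> \<noteq> {}"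
proof
  assume e: "Bfut \<gamma> = {}"
  have "\<forall>y\<in>range \<gamma>. \<exists>t\<ge>0. y \<notin> \<gamma> ` {t..}"
    using e unfolding Bfut_def by blast
  then obtain g where g: "\<forall>y\<in>range \<gamma>. g y \<ge> 0 \<and> y \<notin> \<gamma> ` {g y..}" by metis
  define T where "T = Max (g ` range \<gamma>)"
  have "g (\<gamma> T) \<le> T" unfolding T_def using sol_range_fin[OF assms] by simp
  then have "\<gamma> T \<in> \<gamma> ` {g (\<gamma> T)..}" by simp
  then show False using g by blast
qed

lemma Apast_sc: assumes "full_solution X V \<gamma>" "a \<in> Apast \<gamma>" "a' \<in> Apast \<gamma>"
  shows "reach a a'"
proof -
  obtain s where s: "s \<le> 0" "a' = \<gamma> s" using assms(3) unfolding Apast_def by force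
  have "a \<in> \<gamma> ` {..s}" using assms(2) s(1) unfolding Apast_def by blast
  then obtain t where "t \<le> s" "a = \<gamma> t" by force
  then show ?thesis using sol_reach[OF assms(1)] s by blast
qed

lemma Bfut_sc: assumes "full_solution X V \<gamma>" "a \<in> Bfut \<gamma>" "a' \<in> Bfut \<gamma>"
  shows "reach a a'"
proof -
  obtain s where s: "s \<ge> 0" "a = \<gamma> s" using assms(2) unfolding Bfut_def by force
  have "a' \<in> \<gamma> ` {s..}" using assms(3) s(1) unfolding Bfut_def by blast
  then obtain t where "s \<le> t" "a' = \<gamma> t" by force
  then show ?thesis using sol_reach[OF assms(1)] s by blast
qed

lemma AB_reach: assumes "full_solution X V \<gamma>" "a \<in> Apast \<gamma>" "b \<in> Bfut \<gamma>"
  shows "reach a b"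
proof -
  obtain s where s: "s \<le> 0" "a = \<gamma> s" using assms(2) unfolding Apast_def by force
  obtain t where t: "t \<ge> 0" "b = \<gamma> t" using assms(3) unfolding Bfut_def by force
  show ?thesis using sol_reach[OF assms(1), of s t] s t by simp
qed

lemma sol_range_top: "full_solution X V \<gamma> \<Longrightarrow> range \<gamma> \<subseteq> topspace X"
  unfolding full_solution_def by blast

end


context mvf begin

lemma reach_walk: "reach x y \<Longrightarrow> \<exists>f n. f 0 = x \<and> f n = y \<and> (\<forall>i<n. stp X V (f i) (f (Suc i)))"
  using rtranclp_imp_relpowp relpowp_fun_conv by metis

lemma walk_via:
  assumes "reach x z" "reach z y"
  shows "\<exists>f n m. m \<le> n \<and> f 0 = x \<and> f m = z \<and> f n = y \<and> (\<forall>i<n. stp X V (f i) (f (Suc i)))"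
proof -
  obtain g m where g: "g 0 = x" "g m = z" "\<forall>i<m. stp X V (g i) (g (Suc i))" using reach_walk[OF assms(1)] by blast
  obtain h n where h: "h 0 = z" "h n = y" "\<forall>i<n. stp X V (h i) (h (Suc i))" using reach_walk[OF assms(2)] by blast
  define f where "f = (\<lambda>i. if i \<le> m then g i else h (i - m))"
  have "\<forall>i<m+n. stp X V (f i) (f (Suc i))"
  proof (intro allI impI)
    fix i assume i: "i < m + n"
    show "stp X V (f i) (f (Suc i))"
    proof (cases "i < m")
      case True then show ?thesis using g(3) unfolding f_def by auto
    next
      case False
      then have "i - m < n" "Suc i - m = Suc (i - m)" using i by auto
      moreover have "f i = h (i - m)" using False g(2) h(1) unfolding f_def by auto
      moreover have "f (Suc i) = h (Suc i - m)" using False unfolding f_def by auto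
      ultimately show ?thesis using h(3) by auto
    qed
  qed
  moreover have "f 0 = x" "f m = z" "f (m+n) = y" using g h unfolding f_def by auto
  ultimately show ?thesis by (intro exI[of _ f] exI[of _ "m+n"] exI[of _ m]) auto
qed

lemma concat:
  assumes s1: "full_solution X V \<eta>1" and s2: "full_solution X V \<eta>2"
    and r1: "reach (\<eta>1 0) z" and r2: "reach z (\<eta>2 0)"
  shows "\<exists>\<delta> k. full_solution X V \<delta> \<and> k \<ge> 0 \<and> z \<in> range \<delta> \<and> (\<forall>t\<le>0. \<delta> t = \<eta>1 t) \<and> (\<forall>t\<ge>k. \<delta> t = \<eta>2 (t - k))"
proof -
  obtain f n m where f: "m \<le> n" "f 0 = \<eta>1 0" "f m = z" "f n = \<eta>2 0" "\<forall>i<n. stp X V (f i) (f (Suc i))"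
    using walk_via[OF r1 r2] by blast
  define \<delta> where "\<delta> = (\<lambda>t. if t \<le> 0 then \<eta>1 t else if t \<le> int n then f (nat t) else \<eta>2 (t - int n))"
  have d1: "\<delta> t = \<eta>1 t" if "t \<le> 0" for t using that unfolding \<delta>_def by auto
  have d2: "\<delta> t = f (nat t)" if "0 \<le> t" "t \<le> int n" for t
    using that f(2) unfolding \<delta>_def by (cases "t = 0") auto
  have d3: "\<delta> t = \<eta>2 (t - int n)" if "int n \<le> t" for t
  proof (cases "t = int n")
    case True then show ?thesis using d2[of t] f(4) by simp
  next
    case False then show ?thesis using that unfolding \<delta>_def by auto
  qed
  have ftop: "f i \<in> topspace X" if "i \<le> n" for i
  proof (cases i)
    case 0 then show ?thesis using f(2) sol_top[OF s1] by simp
  next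
    case (Suc j) then show ?thesis using f(5) that stp_top by (metis Suc_le_lessD)
  qed
  have step: "\<delta> (t + 1) \<in> Pi_V X V (\<delta> t)" for t
  proof -
    consider "t < 0" | "0 \<le> t \<and> t < int n" | "int n \<le> t" by linarith
    then show ?thesis
    proof cases
      case 1 then show ?thesis using d1[of t] d1[of "t+1"] s1 unfolding full_solution_def by simp
    next
      case 2
      then have "stp X V (f (nat t)) (f (Suc (nat t)))" using f(5) by auto
      moreover have "\<delta> t = f (nat t)" using d2 2 by auto
      moreover have "\<delta> (t+1) = f (Suc (nat t))" using d2[of "t+1"] 2 by (simp add: nat_add_distrib)
      ultimately show ?thesis unfolding stp_def by simp
    next
      case 3
      then have "\<delta> t = \<eta>2 (t - int n)" "\<delta> (t+1) = \<eta>2 (t - int n + 1)" using d3[of t] d3[of "t+1"] by (auto simp: algebra_simps)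
      then show ?thesis using s2 unfolding full_solution_def by simp
    qed
  qed
  have rng: "range \<delta> \<subseteq> topspace X"
  proof
    fix y assume "y \<in> range \<delta>"
    then obtain t where t: "y = \<delta> t" by blast
    consider "t \<le> 0" | "0 \<le> t \<and> t \<le> int n" | "int n \<le> t" by linarith
    then show "y \<in> topspace X"
    proof cases
      case 1 then show ?thesis using t d1 sol_top[OF s1] by simp
    next
      case 2
      then have "nat t \<le> n" by linarith
      then show ?thesis using t d2 2 ftop[of "nat t"] by simp
    next
      case 3 then show ?thesis using t d3 sol_top[OF s2] by simp
    qed
  qed
  have "z \<in> range \<delta>" using d2[of "int m"] f(1,3) by (metis of_nat_0_le_iff of_nat_le_iff nat_int rangeI)
  moreover have "full_solution X V \<delta>" unfolding full_solution_def using rng step by blast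
  ultimately show ?thesis using d1 d3 by (intro exI[of _ \<delta>] exI[of _ "int n"]) auto
qed

lemma alpha_eq: assumes "\<forall>t\<le>0. \<delta> t = \<eta> t" shows "alpha_limit X V \<delta> = alpha_limit X V \<eta>"
proof -
  have "\<delta> ` {..t} = \<eta> ` {..t}" if "t \<in> {..0}" for t
    using assms that by (intro image_cong) auto
  then have "(\<Inter>t\<in>{..0}. \<delta> ` {..t}) = (\<Inter>t\<in>{..0}. \<eta> ` {..t})" by (intro INF_cong) auto
  then show ?thesis unfolding alpha_limit_def by simp
qed

lemma omega_eq: assumes k: "k \<ge> 0" and d: "\<forall>t\<ge>k. \<delta> t = \<eta> (t - k)"
  shows "omega_limit X V \<delta> = omega_limit X V \<eta>"
proof -
  have "Bfut \<delta> = Bfut \<eta>"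
  proof
    show "Bfut \<delta> \<subseteq> Bfut \<eta>"
    proof
      fix x assume x: "x \<in> Bfut \<delta>"
      show "x \<in> Bfut \<eta>" unfolding Bfut_def
      proof
        fix t :: int assume t: "t \<in> {0..}"
        have "x \<in> \<delta> ` {t + k..}" using x t k unfolding Bfut_def by auto
        then obtain s where s: "s \<ge> t + k" "x = \<delta> s" by auto
        then have "x = \<eta> (s - k)" using d t k by auto
        then show "x \<in> \<eta> ` {t..}" using s by auto
      qed
    qed
    show "Bfut \<eta> \<subseteq> Bfut \<delta>"
    proof
      fix x assume x: "x \<in> Bfut \<eta>"
      show "x \<in> Bfut \<delta>" unfolding Bfut_def
      proof
        fix t :: int assume t: "t \<in> {0..}"
        have "x \<in> \<eta> ` {t..}" using x t unfolding Bfut_def by auto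
        then obtain s where s: "s \<ge> t" "x = \<eta> s" by auto
        then have "x = \<delta> (s + k)" using d t k by auto
        then show "x \<in> \<delta> ` {t..}" using s k by auto
      qed
    qed
  qed
  then show ?thesis unfolding omega_Bfut by simp
qed

lemma concat_ess:
  assumes e1: "essential X V \<eta>1" and e2: "essential X V \<eta>2"
    and r1: "reach (\<eta>1 0) z" and r2: "reach z (\<eta>2 0)"
  shows "\<exists>\<delta>. essential X V \<delta> \<and> z \<in> range \<delta> \<and> alpha_limit X V \<delta> = alpha_limit X V \<eta>1
     \<and> omega_limit X V \<delta> = omega_limit X V \<eta>2"
proof -
  obtain \<delta> k where d: "full_solution X V \<delta>" "k \<ge> 0" "z \<in> range \<delta>" "\<forall>t\<le>0. \<delta> t = \<eta>1 t" "\<forall>t\<ge>k. \<delta> t = \<eta>2 (t - k)"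
  proof -
    have "full_solution X V \<eta>1" "full_solution X V \<eta>2" using e1 e2 unfolding essential_def by auto
    from concat[OF this r1 r2] show ?thesis using that by blast
  qed
  have a: "alpha_limit X V \<delta> = alpha_limit X V \<eta>1" using alpha_eq d(4) by blast
  have o: "omega_limit X V \<delta> = omega_limit X V \<eta>2" using omega_eq d(2,5) by blast
  have "essential X V \<delta>" using e1 e2 d(1) unfolding essential_def a o by blast
  then show ?thesis using a o d(3) by blast
qed

end


context mvf begin

lemma inv_sol: assumes "invariant X V S" "x \<in> S"
  shows "\<exists>\<eta>. essential X V \<eta> \<and> range \<eta> \<subseteq> S \<and> \<eta> 0 = x"
  using assms unfolding invariant_def Inv_def essential_in_def by blast

lemma alpha_ne: assumes "full_solution X V \<gamma>" shows "alpha_limit X V \<gamma> \<noteq> {}"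
proof -
  have "Apast \<gamma> \<subseteq> lc_hull X V (Apast \<gamma>)" by (rule hull_sup)
  then show ?thesis using Apast_ne[OF assms] unfolding alpha_Apast by auto
qed
lemma omega_ne: assumes "full_solution X V \<gamma>" shows "omega_limit X V \<gamma> \<noteq> {}"
proof -
  have "Bfut \<gamma> \<subseteq> lc_hull X V (Bfut \<gamma>)" by (rule hull_sup)
  then show ?thesis using Bfut_ne[OF assms] unfolding omega_Bfut by auto
qed

lemma lims_sub: assumes "S \<subseteq> topspace X" "isolated_invariant X V S" "range \<eta> \<subseteq> S"
  shows "alpha_limit X V \<eta> \<subseteq> S" "omega_limit X V \<eta> \<subseteq> S"
  using iso_hull[OF assms(1,2)] Apast_range Bfut_range assms(3) unfolding alpha_Apast omega_Bfut
  by (meson order_trans)+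

lemma alpha_in_RT: assumes "full_solution X V \<gamma>" "x \<in> alpha_limit X V \<gamma>"
  shows "\<exists>a\<in>Apast \<gamma>. reach x a"
proof -
  have "Apast \<gamma> \<subseteq> RT (Apast \<gamma>)" unfolding RT_def using Apast_range sol_range_top[OF assms(1)] by blast
  then have "x \<in> RT (Apast \<gamma>)" using hull_sub[OF _ RT_lc] assms(2) unfolding alpha_Apast by blast
  then show ?thesis unfolding RT_def by blast
qed

lemma omega_in_RF: assumes "full_solution X V \<gamma>" "y \<in> omega_limit X V \<gamma>"
  shows "\<exists>b\<in>Bfut \<gamma>. reach b y"
proof -
  have "Bfut \<gamma> \<subseteq> RF (Bfut \<gamma>)" unfolding RF_def using Bfut_range sol_range_top[OF assms(1)] by blast
  then have "y \<in> RF (Bfut \<gamma>)" using hull_sub[OF _ RF_lc] assms(2) unfolding omega_Bfut by blast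
  then show ?thesis unfolding RF_def by blast
qed

lemma absorb:
  assumes St: "S \<subseteq> topspace X" and sat: "saturated X V S" and iso: "isolated_invariant X V S"
    and Lsc: "\<And>x z. x \<in> L \<Longrightarrow> z \<in> L \<Longrightarrow> reach x z" and x: "x \<in> L" "x \<in> S"
  shows "L \<subseteq> S"
proof
  fix z assume z: "z \<in> L"
  obtain \<eta> where \<eta>: "essential X V \<eta>" "range \<eta> \<subseteq> S" "\<eta> 0 = x"
  proof -
    have "invariant X V S" using iso unfolding isolated_invariant_def by simp
    from inv_sol[OF this x(2)] show ?thesis using that by blast
  qed
  obtain \<sigma> where \<sigma>: "essential X V \<sigma>" "z \<in> range \<sigma>" "alpha_limit X V \<sigma> = alpha_limit X V \<eta>"
      "omega_limit X V \<sigma> = omega_limit X V \<eta>"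
    using concat_ess[OF \<eta>(1) \<eta>(1), of z] Lsc[OF x(1) z] Lsc[OF z x(1)] \<eta>(3) by auto
  have "alpha_limit X V \<sigma> \<subseteq> S" "omega_limit X V \<sigma> \<subseteq> S"
    using lims_sub[OF St iso \<eta>(2)] \<sigma>(3,4) by auto
  moreover have "essential_in X V (topspace X) \<sigma>"
    using \<sigma>(1) unfolding essential_in_def essential_def full_solution_def by blast
  ultimately have "range \<sigma> \<subseteq> S" using sat unfolding saturated_def by blast
  then show "z \<in> S" using \<sigma>(2) by blast
qed

end

locale morse = mvf +
  fixes P :: "'p set" and M :: "'p \<Rightarrow> 'a set"
  assumes Mtop: "\<forall>p\<in>P. M p \<subseteq> topspace X"
    and disj: "\<forall>p\<in>P. \<forall>q\<in>P. p \<noteq> q \<longrightarrow> M p \<inter> M q = {}"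
begin

lemma same_idx: "p \<in> P \<Longrightarrow> q \<in> P \<Longrightarrow> A \<noteq> {} \<Longrightarrow> A \<subseteq> M p \<Longrightarrow> A \<subseteq> M q \<Longrightarrow> p = q"
  using disj by blast

definition C2 where "C2 r \<longleftrightarrow> (\<forall>\<gamma>. essential_in X V (topspace X) \<gamma> \<longrightarrow>
                 (\<exists>p\<in>P. \<exists>q\<in>P. (q, p) \<in> r \<and>
                    alpha_limit X V \<gamma> \<subseteq> M p \<and> omega_limit X V \<gamma> \<subseteq> M q))"

lemma K1:
  assumes iso: "\<forall>p\<in>P. isolated_invariant X V (M p)" and po: "partial_order_on P r" and c2: "C2 r"
  shows "morse_predecomposition X V P M" "admissible_preorder X V P M r"
proof -
  show "morse_predecomposition X V P M"
    unfolding morse_predecomposition_def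
  proof (intro conjI allI impI)
    show "\<forall>p\<in>P. M p \<subseteq> topspace X" using Mtop .
    show "\<forall>p\<in>P. \<forall>q\<in>P. p \<noteq> q \<longrightarrow> M p \<inter> M q = {}" using disj .
    show "\<forall>p\<in>P. isolated_invariant X V (M p)" using iso .
    fix \<gamma> assume g: "essential_in X V (topspace X) \<gamma>"
    then have fs: "full_solution X V \<gamma>" unfolding essential_in_def essential_def by blast
    obtain p q where "p \<in> P" "q \<in> P" "alpha_limit X V \<gamma> \<subseteq> M p" "omega_limit X V \<gamma> \<subseteq> M q"
      using c2 g unfolding C2_def by blast
    then show "\<exists>p\<in>P. \<exists>q\<in>P. is_link X V \<gamma> (M p) (M q)"
      unfolding is_link_def using fs alpha_ne[OF fs] omega_ne[OF fs] by blast
  qed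
  show "admissible_preorder X V P M r"
    unfolding admissible_preorder_def
  proof (intro conjI ballI impI)
    show "preorder_on P r" using po unfolding partial_order_on_def by blast
    fix p q assume p: "p \<in> P" and q: "q \<in> P" and "\<exists>\<gamma>. is_link X V \<gamma> (M p) (M q)"
    then obtain \<gamma> x y where fs: "full_solution X V \<gamma>" and x: "x \<in> alpha_limit X V \<gamma>" "x \<in> M p"
        and y: "y \<in> omega_limit X V \<gamma>" "y \<in> M q"
      unfolding is_link_def by blast
    obtain a where a: "a \<in> Apast \<gamma>" "reach x a" using alpha_in_RT[OF fs x(1)] by blast
    obtain b where b: "b \<in> Bfut \<gamma>" "reach b y" using omega_in_RF[OF fs y(1)] by blast
    have xy: "reach x y" using a b AB_reach[OF fs a(1) b(1)] by (meson rtranclp_trans)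
    obtain \<eta> where \<eta>: "essential X V \<eta>" "range \<eta> \<subseteq> M p" "\<eta> 0 = x"
    proof -
      have "invariant X V (M p)" using iso p unfolding isolated_invariant_def by simp
      from inv_sol[OF this x(2)] show ?thesis using that by blast
    qed
    obtain \<zeta> where \<zeta>: "essential X V \<zeta>" "range \<zeta> \<subseteq> M q" "\<zeta> 0 = y"
    proof -
      have "invariant X V (M q)" using iso q unfolding isolated_invariant_def by simp
      from inv_sol[OF this y(2)] show ?thesis using that by blast
    qed
    obtain \<delta> where \<delta>: "essential X V \<delta>" "alpha_limit X V \<delta> = alpha_limit X V \<eta>"
      "omega_limit X V \<delta> = omega_limit X V \<zeta>"
      using concat_ess[OF \<eta>(1) \<zeta>(1), of x] \<eta>(3) \<zeta>(3) xy by auto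
    have "essential_in X V (topspace X) \<delta>"
      using \<delta>(1) unfolding essential_in_def essential_def full_solution_def by blast
    then obtain p' q' where pq': "p' \<in> P" "q' \<in> P" "(q', p') \<in> r" "alpha_limit X V \<delta> \<subseteq> M p'"
       "omega_limit X V \<delta> \<subseteq> M q'"
      using c2 unfolding C2_def by blast
    have fe: "full_solution X V \<eta>" "full_solution X V \<zeta>" using \<eta>(1) \<zeta>(1) unfolding essential_def by auto
    have "alpha_limit X V \<eta> \<subseteq> M p" using lims_sub(1)[OF _ _ \<eta>(2)] Mtop iso p by blast
    then have "p' = p" using same_idx[OF pq'(1) p alpha_ne[OF fe(1)]] pq'(4) \<delta>(2) by auto
    have "omega_limit X V \<zeta> \<subseteq> M q" using lims_sub(2)[OF _ _ \<zeta>(2)] Mtop iso q by blast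
    then have "q' = q" using same_idx[OF pq'(2) q omega_ne[OF fe(2)]] pq'(5) \<delta>(3) by auto
    show "(q, p) \<in> r" using pq'(3) \<open>p' = p\<close> \<open>q' = q\<close> by simp
  qed
qed

lemma K2:
  assumes md: "morse_decomposition X V P M" and adm: "admissible_preorder X V P M r"
  shows "C2 r"
  unfolding C2_def
proof (intro allI impI)
  fix \<gamma> assume g: "essential_in X V (topspace X) \<gamma>"
  then have fs: "full_solution X V \<gamma>" unfolding essential_in_def essential_def by blast
  have pd: "morse_predecomposition X V P M" using md unfolding morse_decomposition_def by blast
  obtain p q where pq: "p \<in> P" "q \<in> P" "is_link X V \<gamma> (M p) (M q)"
  proof -
    have "\<forall>\<gamma>. essential_in X V (topspace X) \<gamma> \<longrightarrow> (\<exists>p\<in>P. \<exists>q\<in>P. is_link X V \<gamma> (M p) (M q))"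
      using pd unfolding morse_predecomposition_def by simp
    then show ?thesis using g that by blast
  qed
  have "\<forall>p\<in>P. \<forall>q\<in>P. (\<exists>\<gamma>. is_link X V \<gamma> (M p) (M q)) \<longrightarrow> (q, p) \<in> r"
    using adm unfolding admissible_preorder_def by simp
  then have qp: "(q, p) \<in> r" using pq by blast
  have "\<forall>p\<in>P. saturated X V (M p)" using md unfolding morse_decomposition_def by simp
  then have sat: "saturated X V (M p)" "saturated X V (M q)" using pq by auto
  have "\<forall>p\<in>P. isolated_invariant X V (M p)" using pd unfolding morse_predecomposition_def by simp
  then have iso: "isolated_invariant X V (M p)" "isolated_invariant X V (M q)" using pq by auto
  have Asub: "Apast \<gamma> \<subseteq> topspace X" "Bfut \<gamma> \<subseteq> topspace X"
    using Apast_range Bfut_range sol_range_top[OF fs] by blast+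
  obtain x where x: "x \<in> alpha_limit X V \<gamma>" "x \<in> M p" using pq(3) unfolding is_link_def by blast
  obtain y where y: "y \<in> omega_limit X V \<gamma>" "y \<in> M q" using pq(3) unfolding is_link_def by blast
  have "alpha_limit X V \<gamma> \<subseteq> M p"
  proof (rule absorb[OF _ sat(1) iso(1) _ x])
    show "M p \<subseteq> topspace X" using Mtop pq by blast
    fix u w assume "u \<in> alpha_limit X V \<gamma>" "w \<in> alpha_limit X V \<gamma>"
    then show "reach u w" using hull_strong[OF Asub(1) Apast_sc[OF fs]] unfolding alpha_Apast by blast
  qed
  moreover have "omega_limit X V \<gamma> \<subseteq> M q"
  proof (rule absorb[OF _ sat(2) iso(2) _ y])
    show "M q \<subseteq> topspace X" using Mtop pq by blast
    fix u w assume "u \<in> omega_limit X V \<gamma>" "w \<in> omega_limit X V \<gamma>"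
    then show "reach u w" using hull_strong[OF Asub(2) Bfut_sc[OF fs]] unfolding omega_Bfut by blast
  qed
  ultimately show "\<exists>p\<in>P. \<exists>q\<in>P. (q, p) \<in> r \<and> alpha_limit X V \<gamma> \<subseteq> M p \<and> omega_limit X V \<gamma> \<subseteq> M q"
    using pq qp by blast
qed

end


context morse begin

definition C3 where "C3 r \<longleftrightarrow> (\<forall>\<gamma>. essential_in X V (topspace X) \<gamma> \<longrightarrow>
                 (\<exists>p\<in>P. range \<gamma> \<subseteq> M p) \<or>
                 (\<exists>p\<in>P. \<exists>q\<in>P. (q, p) \<in> r \<and> q \<noteq> p \<and>
                    alpha_limit X V \<gamma> \<subseteq> M p \<and> omega_limit X V \<gamma> \<subseteq> M q))"

lemma fwd: assumes "morse_decomposition X V P M"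
  shows "\<forall>p\<in>P. saturated X V (M p) \<and> isolated_invariant X V (M p)"
    "\<exists>r. partial_order_on P r \<and> C2 r"
proof -
  have "\<forall>p\<in>P. saturated X V (M p)" using assms unfolding morse_decomposition_def by simp
  moreover have "\<forall>p\<in>P. isolated_invariant X V (M p)"
    using assms unfolding morse_decomposition_def morse_predecomposition_def by simp
  ultimately show "\<forall>p\<in>P. saturated X V (M p) \<and> isolated_invariant X V (M p)" by blast
  obtain r where "admissible_preorder X V P M r" "partial_order_on P r"
    using assms unfolding morse_decomposition_def by blast
  then show "\<exists>r. partial_order_on P r \<and> C2 r" using K2[OF assms] by blast
qed

lemma bwd: assumes "\<forall>p\<in>P. saturated X V (M p) \<and> isolated_invariant X V (M p)"
   "partial_order_on P r" "C2 r"
  shows "morse_decomposition X V P M"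
proof -
  have iso: "\<forall>p\<in>P. isolated_invariant X V (M p)" using assms(1) by blast
  show ?thesis unfolding morse_decomposition_def
    using K1[OF iso assms(2,3)] assms by blast
qed

lemma C2_C3: assumes sat: "\<forall>p\<in>P. saturated X V (M p)" and c2: "C2 r" shows "C3 r"
  unfolding C3_def
proof (intro allI impI)
  fix \<gamma> assume g: "essential_in X V (topspace X) \<gamma>"
  then obtain p q where pq: "p \<in> P" "q \<in> P" "(q, p) \<in> r" "alpha_limit X V \<gamma> \<subseteq> M p" "omega_limit X V \<gamma> \<subseteq> M q"
    using c2[unfolded C2_def, rule_format, OF g] by blast
  show "(\<exists>p\<in>P. range \<gamma> \<subseteq> M p) \<or> (\<exists>p\<in>P. \<exists>q\<in>P. (q, p) \<in> r \<and> q \<noteq> p \<and>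
          alpha_limit X V \<gamma> \<subseteq> M p \<and> omega_limit X V \<gamma> \<subseteq> M q)"
  proof (cases "q = p")
    case True
    have "\<forall>\<gamma>. essential_in X V (topspace X) \<gamma> \<and> alpha_limit X V \<gamma> \<subseteq> M p \<and>
          omega_limit X V \<gamma> \<subseteq> M p \<longrightarrow> range \<gamma> \<subseteq> M p"
      using sat pq(1) unfolding saturated_def by blast
    then have "range \<gamma> \<subseteq> M p" using g pq True by blast
    then show ?thesis using pq(1) by blast
  next
    case False then show ?thesis using pq by blast
  qed
qed

lemma C3_C2: assumes iso: "\<forall>p\<in>P. isolated_invariant X V (M p)" and po: "partial_order_on P r"
  and c3: "C3 r"
  shows "C2 r" "\<forall>p\<in>P. saturated X V (M p)"
proof -
  have refl: "(p, p) \<in> r" if "p \<in> P" for p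
    using po that unfolding partial_order_on_def preorder_on_def by (meson refl_onD)
  have lims: "alpha_limit X V \<gamma> \<subseteq> M p \<and> omega_limit X V \<gamma> \<subseteq> M p" if "p \<in> P" "range \<gamma> \<subseteq> M p" for p \<gamma>
    using lims_sub[OF _ _ that(2)] Mtop iso that(1) by blast
  have fsg: "full_solution X V \<gamma>" if "essential_in X V (topspace X) \<gamma>" for \<gamma>
    using that unfolding essential_in_def essential_def by blast
  show "C2 r" unfolding C2_def
  proof (intro allI impI)
    fix \<gamma> assume g: "essential_in X V (topspace X) \<gamma>"
    have "(\<exists>p\<in>P. range \<gamma> \<subseteq> M p) \<or> (\<exists>p\<in>P. \<exists>q\<in>P. (q, p) \<in> r \<and> q \<noteq> p \<and>
          alpha_limit X V \<gamma> \<subseteq> M p \<and> omega_limit X V \<gamma> \<subseteq> M q)" using c3[unfolded C3_def, rule_format, OF g] .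
    then show "\<exists>p\<in>P. \<exists>q\<in>P. (q, p) \<in> r \<and> alpha_limit X V \<gamma> \<subseteq> M p \<and> omega_limit X V \<gamma> \<subseteq> M q"
    proof
      assume "\<exists>p\<in>P. range \<gamma> \<subseteq> M p"
      then obtain p where p: "p \<in> P" "range \<gamma> \<subseteq> M p" by blast
      show ?thesis using lims[OF p] refl[OF p(1)] p(1) by blast
    next
      assume "\<exists>p\<in>P. \<exists>q\<in>P. (q, p) \<in> r \<and> q \<noteq> p \<and> alpha_limit X V \<gamma> \<subseteq> M p \<and> omega_limit X V \<gamma> \<subseteq> M q"
      then show ?thesis by blast
    qed
  qed
  show "\<forall>p\<in>P. saturated X V (M p)"
  proof
    fix p assume p: "p \<in> P"
    show "saturated X V (M p)" unfolding saturated_def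
    proof (intro conjI allI impI)
      show "invariant X V (M p)" using iso p unfolding isolated_invariant_def by simp
      fix \<gamma> assume h: "essential_in X V (topspace X) \<gamma> \<and> alpha_limit X V \<gamma> \<subseteq> M p \<and> omega_limit X V \<gamma> \<subseteq> M p"
      then have g: "essential_in X V (topspace X) \<gamma>" by blast
      have ane: "alpha_limit X V \<gamma> \<noteq> {}" and one: "omega_limit X V \<gamma> \<noteq> {}"
        using alpha_ne[OF fsg[OF g]] omega_ne[OF fsg[OF g]] by auto
      have "(\<exists>p\<in>P. range \<gamma> \<subseteq> M p) \<or> (\<exists>p\<in>P. \<exists>q\<in>P. (q, p) \<in> r \<and> q \<noteq> p \<and>
          alpha_limit X V \<gamma> \<subseteq> M p \<and> omega_limit X V \<gamma> \<subseteq> M q)" using c3[unfolded C3_def, rule_format, OF g] .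
      then show "range \<gamma> \<subseteq> M p"
      proof
        assume "\<exists>p\<in>P. range \<gamma> \<subseteq> M p"
        then obtain p' where p': "p' \<in> P" "range \<gamma> \<subseteq> M p'" by blast
        then have "alpha_limit X V \<gamma> \<subseteq> M p'" using lims by blast
        then have "p' = p" using same_idx[OF p'(1) p ane] h by blast
        then show ?thesis using p' by simp
      next
        assume "\<exists>p\<in>P. \<exists>q\<in>P. (q, p) \<in> r \<and> q \<noteq> p \<and>
          alpha_limit X V \<gamma> \<subseteq> M p \<and> omega_limit X V \<gamma> \<subseteq> M q"
        then obtain p' q' where pq: "p' \<in> P" "q' \<in> P" "q' \<noteq> p'" "alpha_limit X V \<gamma> \<subseteq> M p'"
           "omega_limit X V \<gamma> \<subseteq> M q'" by blast
        have "p' = p" using same_idx[OF pq(1) p ane] pq(4) h by blast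
        moreover have "q' = p" using same_idx[OF pq(2) p one] pq(5) h by blast
        ultimately show ?thesis using pq(3) by simp
      qed
    qed
  qed
qed

end

theorem theorem4p11:
  fixes X :: "'a topology" and V :: "'a set set" and P :: "'p set" and M :: "'p \<Rightarrow> 'a set"
  assumes "finite (topspace X)" and "t0_space X"
    and "multivector_field X V"
    and "invariant X V (topspace X)"
    and "\<forall>p\<in>P. M p \<subseteq> topspace X"
    and "\<forall>p\<in>P. \<forall>q\<in>P. p \<noteq> q \<longrightarrow> M p \<inter> M q = {}"
  shows "(morse_decomposition X V P M \<longleftrightarrow>
           (\<forall>p\<in>P. saturated X V (M p) \<and> isolated_invariant X V (M p)) \<and>
           (\<exists>r. partial_order_on P r \<and>
              (\<forall>\<gamma>. essential_in X V (topspace X) \<gamma> \<longrightarrow>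
                 (\<exists>p\<in>P. \<exists>q\<in>P. (q, p) \<in> r \<and>
                    alpha_limit X V \<gamma> \<subseteq> M p \<and> omega_limit X V \<gamma> \<subseteq> M q))))
       \<and> (morse_decomposition X V P M \<longleftrightarrow>
           (\<forall>p\<in>P. isolated_invariant X V (M p)) \<and>
           (\<exists>r. partial_order_on P r \<and>
              (\<forall>\<gamma>. essential_in X V (topspace X) \<gamma> \<longrightarrow>
                 (\<exists>p\<in>P. range \<gamma> \<subseteq> M p) \<or>
                 (\<exists>p\<in>P. \<exists>q\<in>P. (q, p) \<in> r \<and> q \<noteq> p \<and>
                    alpha_limit X V \<gamma> \<subseteq> M p \<and> omega_limit X V \<gamma> \<subseteq> M q))))
       \<and> (morse_decomposition X V P M \<longrightarrow>
           (\<forall>p\<in>P. saturated X V (M p) \<and> isolated_invariant X V (M p)))"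
proof -
  interpret morse X V P M
    using assms by unfold_locales auto
  have part1: "morse_decomposition X V P M \<longleftrightarrow>
           (\<forall>p\<in>P. saturated X V (M p) \<and> isolated_invariant X V (M p)) \<and> (\<exists>r. partial_order_on P r \<and> C2 r)"
    using fwd bwd by blast
  have part2: "morse_decomposition X V P M \<longleftrightarrow>
           (\<forall>p\<in>P. isolated_invariant X V (M p)) \<and> (\<exists>r. partial_order_on P r \<and> C3 r)"
  proof
    assume md: "morse_decomposition X V P M"
    obtain r where "partial_order_on P r" "C2 r" using fwd(2)[OF md] by blast
    moreover have "\<forall>p\<in>P. saturated X V (M p)" using fwd(1)[OF md] by blast
    ultimately show "(\<forall>p\<in>P. isolated_invariant X V (M p)) \<and> (\<exists>r. partial_order_on P r \<and> C3 r)"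
      using fwd(1)[OF md] C2_C3 by blast
  next
    assume h: "(\<forall>p\<in>P. isolated_invariant X V (M p)) \<and> (\<exists>r. partial_order_on P r \<and> C3 r)"
    then obtain r where r: "partial_order_on P r" "C3 r" by blast
    have iso: "\<forall>p\<in>P. isolated_invariant X V (M p)" using h by blast
    show "morse_decomposition X V P M"
      using bwd[OF _ r(1)] C3_C2[OF iso r] iso by blast
  qed
  show ?thesis using part1 part2 fwd(1) unfolding C2_def C3_def by blast
qed

end
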